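(* Let $K$ be a simplicial complex on $[m]$ and let $K_1,\dots,K_m$ be simplicial complexes on pairwise disjoint finite vertex sets, each having at least one vertex (a 0-simplex). Suppose $K$ has a minimal missing face $\omega$ with $|\omega|\ge3$ and there is a vertex $v\in\omega$ such that $K_v$ contains a 1-simplex. Then for no $k\ge0$ is the substitution complex $K(K_1,\dots,K_m)$ equal to the $k$-skeleton of a flag complex.
   Context: A minimal missing face of $K$ is a subset $\omega$ of the vertex set with $\omega\notin K$ but every proper subset of $\omega$ in $K$. A simplicial complex is flag if every set of its vertices pairwise joined by edges is a simplex. The $k$-skeleton of a complex consists of its simplices of dimension at most $k$. The substitution complex $K(K_1,\dots,K_m)$ is $\bigcup_{\sigma\in K}\ast_{i\in\sigma}K_i$, i.e. its simplices are the sets $\bigcup_{i\in\sigma}\tau_i$ with $\sigma\in K$ and $\tau_i\in K_i$. *)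

theory Defs
  imports Main
begin

text \<open>Ghost vertices (elements of V not forming a 0-simplex) are allowed.\<close>
definition simplicial_complex_on :: "'a set \<Rightarrow> 'a set set \<Rightarrow> bool" where
  "simplicial_complex_on V K \<longleftrightarrow> finite V \<and> {} \<in> K \<and> (\<forall>\<sigma>\<in>K. \<sigma> \<subseteq> V)
     \<and> (\<forall>\<sigma>\<in>K. \<forall>\<tau>. \<tau> \<subseteq> \<sigma> \<longrightarrow> \<tau> \<in> K)"

definition vertices :: "'a set set \<Rightarrow> 'a set" where
  "vertices K = {x. {x} \<in> K}"

definition minimal_missing_face :: "'a set \<Rightarrow> 'a set set \<Rightarrow> 'a set \<Rightarrow> bool" where
  "minimal_missing_face V K \<omega> \<longleftrightarrow> \<omega> \<subseteq> V \<and> \<omega> \<notin> K \<and> (\<forall>\<tau>. \<tau> \<subset> \<omega> \<longrightarrow> \<tau> \<in> K)"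

definition flag :: "'a set set \<Rightarrow> bool" where
  "flag K \<longleftrightarrow> (\<forall>S. finite S \<and> S \<subseteq> vertices K \<and>
      (\<forall>x\<in>S. \<forall>y\<in>S. x \<noteq> y \<longrightarrow> {x, y} \<in> K) \<longrightarrow> S \<in> K)"

definition skeleton :: "nat \<Rightarrow> 'a set set \<Rightarrow> 'a set set" where
  "skeleton k K = {\<sigma> \<in> K. card \<sigma> \<le> k + 1}"

definition substitution :: "'i set set \<Rightarrow> ('i \<Rightarrow> 'a set set) \<Rightarrow> 'a set set" where
  "substitution K Ks = {\<Union>i\<in>\<sigma>. \<tau> i | \<sigma> \<tau>. \<sigma> \<in> K \<and> (\<forall>i\<in>\<sigma>. \<tau> i \<in> Ks i)}"

end

theory Submission
  imports Defs
begin

theorem lemma7p5: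
  fixes m :: nat and K :: "nat set set"
    and Vs :: "nat \<Rightarrow> 'a set" and Ks :: "nat \<Rightarrow> 'a set set"
    and \<omega> :: "nat set" and v :: nat
  assumes "simplicial_complex_on {1..m} K"
    and "\<forall>i\<in>{1..m}. simplicial_complex_on (Vs i) (Ks i)"
    and "\<forall>i\<in>{1..m}. \<forall>j\<in>{1..m}. i \<noteq> j \<longrightarrow> Vs i \<inter> Vs j = {}"
    and "\<forall>i\<in>{1..m}. \<exists>x. {x} \<in> Ks i"
    and "minimal_missing_face {1..m} K \<omega>"
    and "card \<omega> \<ge> 3"
    and "v \<in> \<omega>"
    and "\<exists>e\<in>Ks v. card e = 2"
  shows "\<not> (\<exists>k L W. simplicial_complex_on W L \<and> flag L \<and>
              substitution K Ks = skeleton k L)"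
proof
  assume "\<exists>k L W. simplicial_complex_on W L \<and> flag L \<and> substitution K Ks = skeleton k L"
  then obtain k L W where L: "simplicial_complex_on W L" and fl: "flag L"
    and eq: "substitution K Ks = skeleton k L" by blast
  have K: "finite {1..m::nat}" "{} \<in> K" "\<forall>\<sigma>\<in>K. \<sigma> \<subseteq> {1..m}" "\<forall>\<sigma>\<in>K. \<forall>\<tau>. \<tau> \<subseteq> \<sigma> \<longrightarrow> \<tau> \<in> K"
    using assms(1) unfolding simplicial_complex_on_def by auto
  have om: "\<omega> \<subseteq> {1..m}" "\<omega> \<notin> K" "\<And>\<tau>. \<tau> \<subset> \<omega> \<Longrightarrow> \<tau> \<in> K"
    using assms(5) unfolding minimal_missing_face_def by auto
  have fin: "finite \<omega>" using om(1) finite_subset by blast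
  have KsV: "\<And>i t. i \<in> {1..m} \<Longrightarrow> t \<in> Ks i \<Longrightarrow> t \<subseteq> Vs i"
    using assms(2) unfolding simplicial_complex_on_def by blast
  have Kscl: "\<And>i t s. i \<in> {1..m} \<Longrightarrow> t \<in> Ks i \<Longrightarrow> s \<subseteq> t \<Longrightarrow> s \<in> Ks i"
    using assms(2) unfolding simplicial_complex_on_def by blast
  have vm: "v \<in> {1..m}" using om(1) assms(7) by blast
  obtain e where e: "e \<in> Ks v" "card e = 2" using assms(8) by blast
  then obtain a b where ab: "e = {a,b}" "a \<noteq> b" by (meson card_2_iff)
  have aKs: "{a} \<in> Ks v" using Kscl[OF vm e(1)] ab by blast
  have abV: "a \<in> Vs v" "b \<in> Vs v" using KsV[OF vm e(1)] ab by auto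
  define x where "x i = (if i = v then a else (SOME y. {y} \<in> Ks i))" for i
  have xK: "{x i} \<in> Ks i" if "i \<in> \<omega>" for i
  proof (cases "i = v")
    case True then show ?thesis using aKs x_def by simp
  next
    case False
    have "\<exists>y. {y} \<in> Ks i" using assms(4) om(1) that by blast
    then show ?thesis using False x_def by (metis (mono_tags, lifting) someI_ex)
  qed
  have xV: "x i \<in> Vs i" if "i \<in> \<omega>" for i using KsV[OF _ xK[OF that]] om(1) that by blast
  have disj: "\<And>i j y. i \<in> {1..m} \<Longrightarrow> j \<in> {1..m} \<Longrightarrow> y \<in> Vs i \<Longrightarrow> y \<in> Vs j \<Longrightarrow> i = j"
    using assms(3) by blast
  have inj: "inj_on x \<omega>"
    by (rule inj_onI) (metis xV disj om(1) subsetD)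
  have sub: "x ` A \<in> skeleton k L" if "A \<subset> \<omega>" for A
  proof -
    have "x ` A \<in> substitution K Ks"
      unfolding substitution_def
      apply (rule CollectI)
      apply (rule exI[of _ A], rule exI[of _ "\<lambda>i. {x i}"])
      using om(3)[OF that] xK that by auto
    then show ?thesis using eq by simp
  qed
  define T where "T = x ` \<omega>"
  have cT: "card T = card \<omega>" using card_image[OF inj] T_def by simp
  have "T \<in> L"
  proof -
    have "\<forall>S. finite S \<and> S \<subseteq> vertices L \<and>
      (\<forall>x\<in>S. \<forall>y\<in>S. x \<noteq> y \<longrightarrow> {x, y} \<in> L) \<longrightarrow> S \<in> L" using fl flag_def by blast
    moreover have "finite T" using fin T_def by simp
    moreover have "T \<subseteq> vertices L"
    proof
      fix y assume "y \<in> T"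
      then obtain i where i: "i \<in> \<omega>" "y = x i" using T_def by blast
      have "{i} \<noteq> \<omega>" using assms(6) by auto
      then have "{i} \<subset> \<omega>" using i by blast
      then have "x ` {i} \<in> skeleton k L" by (rule sub)
      then show "y \<in> vertices L" using i unfolding skeleton_def vertices_def by simp
    qed
    moreover have "\<forall>y\<in>T. \<forall>z\<in>T. y \<noteq> z \<longrightarrow> {y, z} \<in> L"
    proof (intro ballI impI)
      fix y z assume "y \<in> T" "z \<in> T" "y \<noteq> z"
      then obtain i j where i: "i \<in> \<omega>" "y = x i" "j \<in> \<omega>" "z = x j" using T_def by blast
      have "{i,j} \<subset> \<omega>"
      proof -
        have "card {i,j} \<le> 2" by (simp add: card_insert_le_m1)
        then have "{i,j} \<noteq> \<omega>" using assms(6) by auto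
        then show ?thesis using i by blast
      qed
      then have "x ` {i,j} \<in> skeleton k L" by (rule sub)
      then show "{y,z} \<in> L" using i unfolding skeleton_def by simp
    qed
    ultimately show ?thesis by blast
  qed
  moreover have "T \<notin> substitution K Ks"
  proof
    assume "T \<in> substitution K Ks"
    then obtain \<sigma> \<tau> where s: "T = (\<Union>i\<in>\<sigma>. \<tau> i)" "\<sigma> \<in> K" "\<forall>i\<in>\<sigma>. \<tau> i \<in> Ks i"
      unfolding substitution_def by blast
    have sm: "\<sigma> \<subseteq> {1..m}" using K(3) s(2) by blast
    have "\<omega> \<subseteq> \<sigma>"
    proof
      fix j assume j: "j \<in> \<omega>"
      then have "x j \<in> T" using T_def by simp
      then obtain i where i: "i \<in> \<sigma>" "x j \<in> \<tau> i" using s(1) by blast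
      have "x j \<in> Vs i" using KsV[of i "\<tau> i"] i s(3) sm by blast
      then have "i = j" using disj[of i j "x j"] xV[OF j] i sm om(1) j by blast
      then show "j \<in> \<sigma>" using i by simp
    qed
    then show False using K(4) s(2) om(2) by blast
  qed
  ultimately have c1: "card T > k + 1" using eq unfolding skeleton_def by auto
  obtain j where j: "j \<in> \<omega>" "j \<noteq> v"
  proof -
    have "\<omega> \<noteq> {v}" using assms(6) by auto
    then show ?thesis using that assms(7) by blast
  qed
  define S where "S = x ` (\<omega> - {j}) \<union> {b}"
  define \<tau> where "\<tau> i = (if i = v then {a,b} else {x i})" for i
  have Seq: "S = (\<Union>i\<in>\<omega> - {j}. \<tau> i)"
  proof -
    have "(\<Union>i\<in>\<omega> - {j}. \<tau> i) = (\<Union>i\<in>\<omega> - {j}. {x i}) \<union> {b}"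
    proof
      show "(\<Union>i\<in>\<omega> - {j}. \<tau> i) \<subseteq> (\<Union>i\<in>\<omega> - {j}. {x i}) \<union> {b}"
        using x_def \<tau>_def by auto
      show "(\<Union>i\<in>\<omega> - {j}. {x i}) \<union> {b} \<subseteq> (\<Union>i\<in>\<omega> - {j}. \<tau> i)"
      proof -
        have "b \<in> \<tau> v" "v \<in> \<omega> - {j}" using \<tau>_def j assms(7) by auto
        moreover have "\<And>i. x i \<in> \<tau> i" using \<tau>_def x_def by simp
        ultimately show ?thesis by blast
      qed
    qed
    then show ?thesis unfolding S_def by blast
  qed
  have "\<omega> - {j} \<in> K" using om(3) j by blast
  moreover have "\<forall>i\<in>\<omega> - {j}. \<tau> i \<in> Ks i" using \<tau>_def xK e ab by auto
  ultimately have "S \<in> substitution K Ks" unfolding substitution_def using Seq by blast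
  then have c2: "card S \<le> k + 1" using eq unfolding skeleton_def by auto
  have bT: "b \<notin> x ` \<omega>"
  proof
    assume "b \<in> x ` \<omega>"
    then obtain i where i: "i \<in> \<omega>" "b = x i" by blast
    show False
    proof (cases "i = v")
      case True then show ?thesis using i ab x_def by simp
    next
      case False
      then show ?thesis using disj[of i v b] xV[OF i(1)] i abV om(1) vm by blast
    qed
  qed
  have "card S = card (x ` (\<omega> - {j})) + 1"
    unfolding S_def using bT fin by (subst card_Un_disjoint) auto
  also have "\<dots> = card \<omega>"
    using card_image[OF inj_on_subset[OF inj, of "\<omega> - {j}"]] j fin
    by (simp add: card_Diff_singleton) (metis One_nat_def Suc_pred card_gt_0_iff empty_iff)
  finally show False using c1 c2 cT by simp
qed

end
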